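(* Consider the Markov chain $\mathcal{G}$ described in the context, with parameters $r\ge1$, $p_c,p_1,\ldots,p_r\in[0,1]$. Let $s$ be any state of the form $s_i^\alpha$ or $c_i^\alpha$, and write $p_{\max}=\max\{p_1,\ldots,p_r\}$. If $p_c<1$ and $\eta:=r\cdot p_{\max}\cdot p_c<1$, then $\mathbb{E}[N(s)]$ is finite.
   Context: Fix an integer $r\ge 1$ and probabilities $p_c,p_1,\ldots,p_r\in[0,1]$. Words $\alpha\in\{1,\ldots,r\}^*$ (finite sequences, $\varepsilon$ the empty word, $\alpha\cdot i$ concatenation, $r^k$ the word of $k$ letters $r$) are called blocks. The Markov chain $\mathcal{G}$ has the countable state space $\{s_i^\alpha, c_i^\alpha : 1\le i\le r,\ \alpha\in\{1,\ldots,r\}^*\}\cup\{\sharp,\bot\}$, initial state $\sharp$, and the following transition probabilities (all unlisted transitions have probability $0$): $p(\sharp,s_1^\varepsilon)=p_c$, $p(\sharp,\bot)=1-p_c$; $p(s_i^\alpha,c_i^\alpha)=p_i$ for $1\le i\le r$; $p(s_i^\alpha,s_{i+1}^\alpha)=1-p_i$ for $1\le i<r$; $p(c_i^\alpha,s_1^{\alpha\cdot i})=p_c$ for $1\le i\le r$; $p(c_i^\alpha,s_{i+1}^\alpha)=1-p_c$ for $1\le i<r$; for every word of the form $\gamma=\beta\cdot i\cdot r^k$ with $1\le i<r$, $k\ge 0$: $p(s_r^{\gamma},s_{i+1}^\beta)=1-p_r$ and $p(c_r^{\gamma},s_{i+1}^\beta)=1-p_c$; for every $\gamma\in r^*$ (including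 $\varepsilon$): $p(s_r^\gamma,\bot)=1-p_r$, $p(c_r^\gamma,\bot)=1-p_c$; and $p(\bot,\bot)=1$. The block of $s_i^\alpha$ and of $c_i^\alpha$ is $\alpha$. For a block $\alpha$ let $E_\alpha=\{s_j^\beta : 1\le j\le r,\ \beta\text{ a proper prefix of }\alpha\}\cup\{\bot\}$. For a state $s$ with block $\alpha$, $N(s)$ is the hitting time $\inf\{n\ge 0: X_n\in E_\alpha\}$ of $E_\alpha$ for the chain $(X_n)$ started at $X_0=s$, i.e. the number of states visited from $s$ (including those in deeper blocks) before the block of $s$ is left upward. *)

theory Defs
  imports "HOL-Analysis.Analysis"
begin

text \<open>States of the chain G.  S i a is s_i^a, C i a is c_i^a (blocks are lists of
letters in {1..r}), Sharp is the initial state and Bot the absorbing state.\<close>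

datatype state = S nat "nat list" | C nat "nat list" | Sharp | Bot

definition valid_block :: "nat \<Rightarrow> nat list \<Rightarrow> bool" where
  "valid_block r a \<longleftrightarrow> (\<forall>x\<in>set a. 1 \<le> x \<and> x \<le> r)"

text \<open>Target of leaving block g upward: for g = b @ [i] @ r^k with i < r it is
s_(i+1)^b; for g in r^* it is Bot.\<close>

definition up_target :: "nat \<Rightarrow> nat list \<Rightarrow> state" where
  "up_target r g =
     (let g' = dropWhile (\<lambda>x. x = r) (rev g)
      in if g' = [] then Bot else S (hd g' + 1) (rev (tl g')))"

fun trans :: "nat \<Rightarrow> real \<Rightarrow> (nat \<Rightarrow> real) \<Rightarrow> state \<Rightarrow> state \<Rightarrow> real" where
  "trans r pc p Sharp y =
     (if y = S 1 [] then pc else 0) + (if y = Bot then 1 - pc else 0)"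
| "trans r pc p Bot y = (if y = Bot then 1 else 0)"
| "trans r pc p (S i a) y =
     (if y = C i a then p i else 0)
     + (if i < r then (if y = S (i+1) a then 1 - p i else 0)
        else (if y = up_target r a then 1 - p r else 0))"
| "trans r pc p (C i a) y =
     (if y = S 1 (a @ [i]) then pc else 0)
     + (if i < r then (if y = S (i+1) a then 1 - pc else 0)
        else (if y = up_target r a then 1 - pc else 0))"

fun block :: "state \<Rightarrow> nat list" where
  "block (S i a) = a"
| "block (C i a) = a"
| "block Sharp = []"
| "block Bot = []"

definition exit_set :: "nat \<Rightarrow> nat list \<Rightarrow> state set" where
  "exit_set r a = {S j b | j b. 1 \<le> j \<and> j \<le> r \<and> (\<exists>c. c \<noteq> [] \<and> a = b @ c)} \<union> {Bot}"

text \<open>surv r pc p E n x = Pr_x(X_0 \<notin> E, ..., X_n \<notin> E) = Pr_x(hitting time of E > n).\<close>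

fun surv :: "nat \<Rightarrow> real \<Rightarrow> (nat \<Rightarrow> real) \<Rightarrow> state set \<Rightarrow> nat \<Rightarrow> state \<Rightarrow> ennreal" where
  "surv r pc p E 0 x = (if x \<in> E then 0 else 1)"
| "surv r pc p E (Suc n) x =
     (if x \<in> E then 0 else (\<Sum>\<^sub>\<infinity> y. ennreal (trans r pc p x y) * surv r pc p E n y))"

text \<open>E[N(s)] for the hitting time N(s) of E_(block s) started at s, via the
tail-sum formula E[N] = sum_(n\<ge>0) Pr(N > n) (valid for N with values in nat \<union> {\<infinity>}).\<close>

definition expected_N :: "nat \<Rightarrow> real \<Rightarrow> (nat \<Rightarrow> real) \<Rightarrow> state \<Rightarrow> ennreal" where
  "expected_N r pc p s = (\<Sum>n. surv r pc p (exit_set r (block s)) n s)"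

end

theory Submission
  imports Defs
begin

definition posv :: "nat \<Rightarrow> real \<Rightarrow> real \<Rightarrow> state \<Rightarrow> real" where
  "posv r pc c x = (case x of S i b \<Rightarrow> (real r + 1 - real i) * c
     | C i b \<Rightarrow> 1 + pc * real r * c + (real r - real i) * c | _ \<Rightarrow> 0)"

definition dv :: "nat \<Rightarrow> real \<Rightarrow> nat list \<Rightarrow> real" where
  "dv r c d = c * sum_list (map (\<lambda>j. real r - real j) d)"

definition good :: "nat \<Rightarrow> nat list \<Rightarrow> state \<Rightarrow> bool" where
  "good r a x \<longleftrightarrow> (\<exists>i d. 1 \<le> i \<and> i \<le> r \<and> valid_block r d \<and> (x = S i (a@d) \<or> x = C i (a@d)))"

definition VV :: "nat \<Rightarrow> real \<Rightarrow> real \<Rightarrow> nat list \<Rightarrow> state \<Rightarrow> ennreal" where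
  "VV r pc c a x = (if x \<in> exit_set r a then 0 else if good r a x
      then ennreal (posv r pc c x + dv r c (drop (length a) (block x))) else \<infinity>)"

lemma infsum_single_ennreal:
  "(\<Sum>\<^sub>\<infinity>y. (if y = t then u else (0::ennreal))) = u"
proof -
  have "(\<Sum>\<^sub>\<infinity>y. (if y = t then u else (0::ennreal))) = (\<Sum>\<^sub>\<infinity>y\<in>{t}. (if y = t then u else (0::ennreal)))"
    by (rule infsum_cong_neutral) auto
  also have "\<dots> = u" by simp
  finally show ?thesis .
qed

lemma infsum2:
  fixes v :: "state \<Rightarrow> ennreal"
  assumes "0 \<le> q1" "0 \<le> q2"
  shows "(\<Sum>\<^sub>\<infinity>y. ennreal ((if y = t1 then q1 else 0) + (if y = t2 then q2 else 0)) * v y)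
     = ennreal q1 * v t1 + ennreal q2 * v t2"
proof -
  have "\<And>y. ennreal ((if y = t1 then q1 else 0) + (if y = t2 then q2 else 0)) * v y
     = (if y = t1 then ennreal q1 * v t1 else 0) + (if y = t2 then ennreal q2 * v t2 else 0)"
    using assms by (auto simp: ennreal_plus distrib_right)
  then have "(\<Sum>\<^sub>\<infinity>y. ennreal ((if y = t1 then q1 else 0) + (if y = t2 then q2 else 0)) * v y)
     = (\<Sum>\<^sub>\<infinity>y. (if y = t1 then ennreal q1 * v t1 else 0) + (if y = t2 then ennreal q2 * v t2 else 0))"
    by simp
  also have "\<dots> = (\<Sum>\<^sub>\<infinity>y. (if y = t1 then ennreal q1 * v t1 else 0)) + (\<Sum>\<^sub>\<infinity>y. (if y = t2 then ennreal q2 * v t2 else 0))"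
    by (rule infsum_add; rule nonneg_summable_on_complete; simp)
  also have "\<dots> = ennreal q1 * v t1 + ennreal q2 * v t2"
    by (simp only: infsum_single_ennreal)
  finally show ?thesis .
qed

lemma infsum_finsum_ennreal:
  fixes f :: "nat \<Rightarrow> 'a \<Rightarrow> ennreal"
  shows "(\<Sum>\<^sub>\<infinity>y. \<Sum>n<K. f n y) = (\<Sum>n<K. \<Sum>\<^sub>\<infinity>y. f n y)"
proof (induction K)
  case 0
  then show ?case by simp
next
  case (Suc K)
  have "(\<Sum>\<^sub>\<infinity>y. \<Sum>n<Suc K. f n y) = (\<Sum>\<^sub>\<infinity>y. (\<Sum>n<K. f n y) + f K y)" by simp
  also have "\<dots> = (\<Sum>\<^sub>\<infinity>y. (\<Sum>n<K. f n y)) + (\<Sum>\<^sub>\<infinity>y. f K y)"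
    by (rule infsum_add; rule nonneg_summable_on_complete; simp)
  finally show ?case using Suc by simp
qed

lemma trans_S:
  assumes "i \<le> r"
  shows "trans r pc p (S i b) y = (if y = C i b then p i else 0)
     + (if y = (if i < r then S (i+1) b else up_target r b) then 1 - p i else 0)"
  using assms by auto

lemma trans_C:
  assumes "i \<le> r"
  shows "trans r pc p (C i b) y = (if y = S 1 (b @ [i]) then pc else 0)
     + (if y = (if i < r then S (i+1) b else up_target r b) then 1 - pc else 0)"
  using assms by auto

lemma dv_append: "dv r c (x @ y) = dv r c x + dv r c y"
  by (simp add: dv_def algebra_simps)

lemma dv_allr: "set d \<subseteq> {r} \<Longrightarrow> dv r c d = 0"
  unfolding dv_def by (induction d) auto

lemma dv_nonneg: "valid_block r d \<Longrightarrow> 0 \<le> c \<Longrightarrow> 0 \<le> dv r c d"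
  unfolding dv_def valid_block_def
  by (intro mult_nonneg_nonneg sum_list_nonneg) auto

lemma dropWhile_decomp:
  assumes "dropWhile (\<lambda>x. x = r) (rev xs) = j # rest"
  shows "\<exists>t. xs = rev rest @ [j] @ t \<and> set t \<subseteq> {r}" and "j \<noteq> r"
proof -
  have "rev xs = takeWhile (\<lambda>x. x = r) (rev xs) @ dropWhile (\<lambda>x. x = r) (rev xs)"
    by simp
  then have "rev xs = takeWhile (\<lambda>x. x = r) (rev xs) @ j # rest" using assms by simp
  then have "xs = rev (takeWhile (\<lambda>x. x = r) (rev xs) @ j # rest)"
    by (metis rev_rev_ident)
  then have "xs = rev rest @ [j] @ rev (takeWhile (\<lambda>x. x = r) (rev xs))" by simp
  moreover have "set (rev (takeWhile (\<lambda>x. x = r) (rev xs))) \<subseteq> {r}"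
    by (auto dest: set_takeWhileD)
  ultimately show "\<exists>t. xs = rev rest @ [j] @ t \<and> set t \<subseteq> {r}" by blast
  have "dropWhile (\<lambda>x. x = r) (rev xs) \<noteq> []" using assms by simp
  from hd_dropWhile[OF this] show "j \<noteq> r" using assms by simp
qed

lemma up_target_exit:
  assumes "valid_block r a"
  shows "up_target r a \<in> exit_set r a"
proof (cases "dropWhile (\<lambda>x. x = r) (rev a)")
  case Nil
  then show ?thesis by (simp add: up_target_def exit_set_def)
next
  case (Cons j rest)
  obtain t where t: "a = rev rest @ [j] @ t" "set t \<subseteq> {r}"
    using dropWhile_decomp(1)[OF Cons] by blast
  have "j \<in> set a" using t(1) by simp
  then have "j \<le> r" using assms by (auto simp: valid_block_def)
  then have "j < r" using dropWhile_decomp(2)[OF Cons] by simp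
  then show ?thesis using Cons t(1)
    by (auto simp: up_target_def exit_set_def intro!: exI[of _ "j # t"])
qed

lemma up_cases:
  assumes a: "valid_block r a" and d: "valid_block r d"
  shows "(dv r c d = 0 \<and> up_target r (a @ d) \<in> exit_set r a)
    \<or> (\<exists>j d1. j < r \<and> valid_block r d1 \<and> up_target r (a @ d) = S (j+1) (a @ d1)
          \<and> dv r c d = (real r - real j) * c + dv r c d1)"
proof (cases "set d \<subseteq> {r}")
  case True
  have "dropWhile (\<lambda>x. x = r) (rev (a @ d)) = dropWhile (\<lambda>x. x = r) (rev a)"
    unfolding rev_append by (rule dropWhile_append2) (use True in auto)
  then have "up_target r (a @ d) = up_target r a"
    unfolding up_target_def by (simp only:)
  moreover have "dv r c d = 0" using True by (rule dv_allr)
  ultimately show ?thesis using up_target_exit[OF a] by simp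
next
  case False
  then obtain x where x: "x \<in> set (rev d)" "x \<noteq> r" by auto
  then have e: "dropWhile (\<lambda>x. x = r) (rev (a @ d)) = dropWhile (\<lambda>x. x = r) (rev d) @ rev a"
    by simp
  have "dropWhile (\<lambda>x. x = r) (rev d) \<noteq> []" using x by (auto simp: dropWhile_eq_Nil_conv)
  then obtain j rest where Cons: "dropWhile (\<lambda>x. x = r) (rev d) = j # rest"
    by (cases "dropWhile (\<lambda>x. x = r) (rev d)") auto
  obtain t where t: "d = rev rest @ [j] @ t" "set t \<subseteq> {r}"
    using dropWhile_decomp(1)[OF Cons] by blast
  have "j \<in> set d" using t(1) by simp
  then have "j \<le> r" using d by (auto simp: valid_block_def)
  then have jr: "j < r" using dropWhile_decomp(2)[OF Cons] by simp
  have ut: "up_target r (a @ d) = S (j+1) (a @ rev rest)"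
    using e Cons by (simp add: up_target_def)
  have vb: "valid_block r (rev rest)" using d t(1) by (auto simp: valid_block_def)
  have "dv r c d = dv r c (rev rest) + (real r - real j) * c"
  proof -
    have z: "dv r c t = 0" by (rule dv_allr[OF t(2)])
    have "dv r c [j] = (real r - real j) * c" by (simp add: dv_def)
    then show ?thesis using z unfolding t(1) dv_append by simp
  qed
  then show ?thesis using jr vb ut by auto
qed

lemma S_notin: "S i (a @ d) \<notin> exit_set r a"
  by (auto simp: exit_set_def)

lemma C_notin: "C i b \<notin> exit_set r a"
  by (auto simp: exit_set_def)

lemma VV_S:
  assumes "1 \<le> i" "i \<le> r" "valid_block r d"
  shows "VV r pc c a (S i (a @ d)) = ennreal ((real r + 1 - real i) * c + dv r c d)"
proof -
  have "good r a (S i (a @ d))" using assms unfolding good_def by blast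
  then show ?thesis using S_notin by (simp add: VV_def posv_def)
qed

lemma VV_C:
  assumes "1 \<le> i" "i \<le> r" "valid_block r d"
  shows "VV r pc c a (C i (a @ d)) = ennreal (1 + pc * real r * c + (real r - real i) * c + dv r c d)"
proof -
  have "good r a (C i (a @ d))" using assms unfolding good_def by blast
  then show ?thesis using C_notin by (simp add: VV_def posv_def)
qed

lemma VV_E: "x \<in> exit_set r a \<Longrightarrow> VV r pc c a x = 0"
  by (simp add: VV_def)

lemma fin_ineq:
  assumes "0 \<le> q1" "0 \<le> q2" "0 \<le> v1" "0 \<le> v2" "1 + q1 * v1 + q2 * v2 \<le> X"
  shows "1 + (ennreal q1 * ennreal v1 + ennreal q2 * ennreal v2) \<le> ennreal X"
proof -
  have "1 + (ennreal q1 * ennreal v1 + ennreal q2 * ennreal v2) = ennreal (1 + q1 * v1 + q2 * v2)"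
    using assms by (simp add: ennreal_mult ennreal_plus add.assoc)
  then show ?thesis using assms(5) by (simp add: ennreal_leI)
qed

lemma valid_snoc: "valid_block r d \<Longrightarrow> 1 \<le> i \<Longrightarrow> i \<le> r \<Longrightarrow> valid_block r (d @ [i])"
  by (auto simp: valid_block_def)

lemma dv_snoc: "dv r c (d @ [i]) = dv r c d + (real r - real i) * c"
  by (simp add: dv_def algebra_simps)

lemma stepB:
  assumes r: "1 \<le> r" and pc: "0 \<le> pc" "pc \<le> 1"
    and p: "\<And>i. 1 \<le> i \<Longrightarrow> i \<le> r \<Longrightarrow> 0 \<le> p i \<and> p i \<le> 1"
    and a: "valid_block r a" and c0: "0 \<le> c"
    and key: "\<And>i. 1 \<le> i \<Longrightarrow> i \<le> r \<Longrightarrow> 1 + p i * (1 + pc * real r * c) \<le> c"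
    and g: "good r a x"
  shows "1 + (\<Sum>\<^sub>\<infinity>y. ennreal (trans r pc p x y) * VV r pc c a y) \<le> VV r pc c a x"
proof -
  obtain i d where i: "1 \<le> i" "i \<le> r" and d: "valid_block r d"
    and x: "x = S i (a @ d) \<or> x = C i (a @ d)"
    using g unfolding good_def by blast
  have D0: "0 \<le> dv r c d" by (rule dv_nonneg[OF d c0])
  have pi: "0 \<le> p i" "p i \<le> 1" using p[OF i] by auto
  have Ci: "VV r pc c a (C i (a @ d)) = ennreal (1 + pc * real r * c + (real r - real i) * c + dv r c d)"
    by (rule VV_C[OF i d])
  have ri: "0 \<le> real r - real i" using i by simp
  have cpr: "0 \<le> c * (pc * real r)" using c0 pc by simp
  have ci: "c * real i \<le> c * real r" using i c0 by (simp add: mult_left_mono)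
  from x show ?thesis
  proof
    assume xS: "x = S i (a @ d)"
    have sum: "(\<Sum>\<^sub>\<infinity>y. ennreal (trans r pc p x y) * VV r pc c a y)
      = ennreal (p i) * VV r pc c a (C i (a @ d)) + ennreal (1 - p i) *
          VV r pc c a (if i < r then S (i+1) (a @ d) else up_target r (a @ d))"
      unfolding xS trans_S[OF i(2)] by (rule infsum2) (use pi in auto)
    have Vx: "VV r pc c a x = ennreal ((real r + 1 - real i) * c + dv r c d)"
      unfolding xS by (rule VV_S[OF i d])
    have k: "1 + p i * (1 + pc * real r * c) \<le> c" by (rule key[OF i])
    show ?thesis
    proof (cases "i < r")
      case True
      have V2: "VV r pc c a (S (i+1) (a @ d)) = ennreal ((real r - real i) * c + dv r c d)"
        using VV_S[of "i+1" r d] True d by simp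
      show ?thesis unfolding sum Vx Ci using True V2
        apply simp
        apply (rule fin_ineq)
        using pi D0 ri c0 pc k mult_left_mono[of "real i" "real r" c] i
        apply (auto simp: algebra_simps)
        using cpr by linarith
    next
      case False
      then have ir: "i = r" using i by simp
      from up_cases[OF a d, of c] show ?thesis
      proof
        assume h: "dv r c d = 0 \<and> up_target r (a @ d) \<in> exit_set r a"
        then have V2: "VV r pc c a (up_target r (a @ d)) = ennreal 0" by (simp add: VV_E)
        show ?thesis unfolding sum Vx Ci 
          apply (simp only: False V2 if_False)
          apply (rule fin_ineq)
          using pi D0 ri c0 pc k h ir by (auto simp: algebra_simps)
      next
        assume "\<exists>j d1. j < r \<and> valid_block r d1 \<and> up_target r (a @ d) = S (j+1) (a @ d1)
          \<and> dv r c d = (real r - real j) * c + dv r c d1"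
        then obtain j d1 where h: "j < r" "valid_block r d1" "up_target r (a @ d) = S (j+1) (a @ d1)"
          "dv r c d = (real r - real j) * c + dv r c d1" by blast
        have V2: "VV r pc c a (up_target r (a @ d)) = ennreal (dv r c d)"
          using VV_S[of "j+1" r d1] h by simp
        show ?thesis unfolding sum Vx Ci 
          apply (simp only: False V2 if_False)
          apply (rule fin_ineq)
          using pi D0 ri c0 pc k h ir by (auto simp: algebra_simps)
      qed
    qed
  next
    assume xC: "x = C i (a @ d)"
    have sum: "(\<Sum>\<^sub>\<infinity>y. ennreal (trans r pc p x y) * VV r pc c a y)
      = ennreal pc * VV r pc c a (S 1 ((a @ d) @ [i])) + ennreal (1 - pc) *
          VV r pc c a (if i < r then S (i+1) (a @ d) else up_target r (a @ d))"
      unfolding xC trans_C[OF i(2)] by (rule infsum2) (use pc in auto)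
    have Vx: "VV r pc c a x = ennreal (1 + pc * real r * c + (real r - real i) * c + dv r c d)"
      unfolding xC by (rule VV_C[OF i d])
    have V1: "VV r pc c a (S 1 ((a @ d) @ [i])) = ennreal (real r * c + dv r c d + (real r - real i) * c)"
      using VV_S[of 1 r "d @ [i]"] valid_snoc[OF d i] r by (simp add: dv_snoc add.assoc)
    show ?thesis
    proof (cases "i < r")
      case True
      have V2: "VV r pc c a (S (i+1) (a @ d)) = ennreal ((real r - real i) * c + dv r c d)"
        using VV_S[of "i+1" r d] True d by simp
      show ?thesis unfolding sum Vx V1 using True V2
        apply simp
        apply (rule fin_ineq)
        using pi D0 ri c0 pc ci apply (auto simp: algebra_simps)
        using ci c0 D0 mult_nonneg_nonneg[OF c0, of "real r"] by linarith
    next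
      case False
      then have ir: "i = r" using i by simp
      from up_cases[OF a d, of c] show ?thesis
      proof
        assume h: "dv r c d = 0 \<and> up_target r (a @ d) \<in> exit_set r a"
        then have V2: "VV r pc c a (up_target r (a @ d)) = ennreal 0" by (simp add: VV_E)
        show ?thesis unfolding sum Vx V1 
          apply (simp only: False V2 if_False)
          apply (rule fin_ineq)
          using pi D0 ri c0 pc h ir by (auto simp: algebra_simps)
      next
        assume "\<exists>j d1. j < r \<and> valid_block r d1 \<and> up_target r (a @ d) = S (j+1) (a @ d1)
          \<and> dv r c d = (real r - real j) * c + dv r c d1"
        then obtain j d1 where h: "j < r" "valid_block r d1" "up_target r (a @ d) = S (j+1) (a @ d1)"
          "dv r c d = (real r - real j) * c + dv r c d1" by blast
        have V2: "VV r pc c a (up_target r (a @ d)) = ennreal (dv r c d)"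
          using VV_S[of "j+1" r d1] h by simp
        show ?thesis unfolding sum Vx V1 
          apply (simp only: False V2 if_False)
          apply (rule fin_ineq)
          using pi D0 ri c0 pc h ir by (auto simp: algebra_simps)
      qed
    qed
  qed
qed

lemma surv_E: "x \<in> E \<Longrightarrow> surv r pc p E n x = 0"
  by (cases n) auto

lemma partial_le:
  assumes r: "1 \<le> r" and pc: "0 \<le> pc" "pc \<le> 1"
    and p: "\<And>i. 1 \<le> i \<Longrightarrow> i \<le> r \<Longrightarrow> 0 \<le> p i \<and> p i \<le> 1"
    and a: "valid_block r a" and c0: "0 \<le> c"
    and key: "\<And>i. 1 \<le> i \<Longrightarrow> i \<le> r \<Longrightarrow> 1 + p i * (1 + pc * real r * c) \<le> c"
  shows "(\<Sum>n<K. surv r pc p (exit_set r a) n x) \<le> VV r pc c a x"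
proof (induction K arbitrary: x)
  case 0
  then show ?case by simp
next
  case (Suc K)
  let ?E = "exit_set r a"
  show ?case
  proof (cases "x \<in> ?E")
    case True
    then show ?thesis by (simp add: surv_E)
  next
    case notE: False
    show ?thesis
    proof (cases "good r a x")
      case False
      then have "VV r pc c a x = \<infinity>" using notE by (simp add: VV_def)
      then show ?thesis by simp
    next
      case True
      have "(\<Sum>n<Suc K. surv r pc p ?E n x) = surv r pc p ?E 0 x + (\<Sum>n<K. surv r pc p ?E (Suc n) x)"
        by (rule sum.lessThan_Suc_shift)
      also have "\<dots> = 1 + (\<Sum>n<K. \<Sum>\<^sub>\<infinity>y. ennreal (trans r pc p x y) * surv r pc p ?E n y)"
        using notE by simp
      also have "\<dots> = 1 + (\<Sum>\<^sub>\<infinity>y. \<Sum>n<K. ennreal (trans r pc p x y) * surv r pc p ?E n y)"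
        by (simp only: infsum_finsum_ennreal)
      also have "\<dots> = 1 + (\<Sum>\<^sub>\<infinity>y. ennreal (trans r pc p x y) * (\<Sum>n<K. surv r pc p ?E n y))"
        by (simp only: sum_distrib_left)
      also have "\<dots> \<le> 1 + (\<Sum>\<^sub>\<infinity>y. ennreal (trans r pc p x y) * VV r pc c a y)"
      proof -
        have "(\<Sum>\<^sub>\<infinity>y. ennreal (trans r pc p x y) * (\<Sum>n<K. surv r pc p ?E n y))
           \<le> (\<Sum>\<^sub>\<infinity>y. ennreal (trans r pc p x y) * VV r pc c a y)"
          by (rule infsum_mono) (auto intro: nonneg_summable_on_complete mult_left_mono Suc.IH)
        then show ?thesis by (rule add_left_mono)
      qed
      also have "\<dots> \<le> VV r pc c a x"
        by (rule stepB[OF r pc p a c0 key True])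
      finally show ?thesis .
    qed
  qed
qed

theorem lemma3p3:
  fixes r :: nat and pc :: real and p :: "nat \<Rightarrow> real" and s :: state
  assumes r: "r \<ge> 1"
    and pc: "0 \<le> pc" "pc \<le> 1"
    and p: "\<And>i. 1 \<le> i \<Longrightarrow> i \<le> r \<Longrightarrow> 0 \<le> p i \<and> p i \<le> 1"
    and s: "\<exists>i a. 1 \<le> i \<and> i \<le> r \<and> valid_block r a \<and> (s = S i a \<or> s = C i a)"
    and pc1: "pc < 1"
    and eta: "real r * Max (p ` {1..r}) * pc < 1"
  shows "expected_N r pc p s < \<infinity>"
proof -
  obtain i a where i: "1 \<le> i" "i \<le> r" and a: "valid_block r a" and sx: "s = S i a \<or> s = C i a"
    using s by blast
  have bs: "block s = a" using sx by auto
  define pm where "pm = Max (p ` {1..r})"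
  define c where "c = 2 / (1 - real r * pm * pc)"
  have eta': "real r * pm * pc < 1" using eta by (simp add: pm_def)
  have pm_ge: "\<And>j. 1 \<le> j \<Longrightarrow> j \<le> r \<Longrightarrow> p j \<le> pm"
    unfolding pm_def by (rule Max_ge) auto
  have pm0: "0 \<le> pm" using pm_ge[of 1] p[of 1] r by simp
  have c0: "0 < c" unfolding c_def using eta' by simp
  have ceq: "c = 2 + (real r * pm * pc) * c"
    unfolding c_def using eta' by (simp add: field_simps)
  have key: "1 + p j * (1 + pc * real r * c) \<le> c" if j: "1 \<le> j" "j \<le> r" for j
  proof -
    have "p j * (pc * real r * c) \<le> pm * (pc * real r * c)"
      by (rule mult_right_mono[OF pm_ge[OF j]]) (use pc c0 in simp)
    moreover have "p j \<le> 1" using p[OF j] by simp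
    ultimately show ?thesis using ceq by (simp add: algebra_simps)
  qed
  have g: "good r a s" using sx i unfolding good_def
    by (metis append_Nil2 valid_block_def empty_iff list.set(1))
  have Vs: "VV r pc c a s < \<infinity>"
    using g sx by (auto simp: VV_def S_notin[of _ a "[]", simplified] C_notin)
  have "expected_N r pc p s = (SUP K. \<Sum>n<K. surv r pc p (exit_set r a) n s)"
    unfolding expected_N_def bs by (rule suminf_eq_SUP)
  also have "\<dots> \<le> VV r pc c a s"
    by (rule SUP_least, rule partial_le[OF r pc p a]) (use c0 key in auto)
  finally show ?thesis using Vs by (meson le_less_trans)
qed

end
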